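(* Let $n\ge 3$ and let $x_{i_1,D_1},\dots,x_{i_p,D_p}$ be partial conjugations, regarded as elements of $\mathrm{Out}^0(W_n)$. Then there exists a hypertree $\Theta\in\mathcal{HT}_n$ that carries every one of $x_{i_1,D_1},\dots,x_{i_p,D_p}$ if and only if these partial conjugations pairwise commute in $\mathrm{Out}^0(W_n)$.
   Context: $W_n=\langle a_1,\dots,a_n\mid a_1^2=\dots=a_n^2=1\rangle$ is the free product of $n$ copies of $\mathbb{Z}_2$; $[n]=\{1,\dots,n\}$. For $i\in[n]$ and a nonempty $D\subseteq[n]\setminus\{i\}$, the partial conjugation $x_{i,D}\in\mathrm{Aut}(W_n)$ sends $a_j\mapsto a_ia_ja_i$ for $j\in D$ and fixes $a_j$ for $j\notin D$. $\mathrm{Aut}^0(W_n)$ is the group of automorphisms sending each $a_j$ to a conjugate of itself (generated by partial conjugations), and $\mathrm{Out}^0(W_n)=\mathrm{Aut}^0(W_n)/\mathrm{Inn}(W_n)$. In $\mathrm{Out}^0(W_n)$ one has $x_{i,D}=x_{i,D^c}$ where $D^c=[n]\setminus(D\cup\{i\})$. A hypergraph on $[n]$ is a set $E$ of subsets (hyperedges) of $[n]$, each of size $\ge 2$. A simple walk from $v$ to $v'$ is a sequence $v=v_0,e_1,v_1,\dots,e_p,v_p=v'$ with $\{v_{t-1},v_t\}\subseteq e_t$, the $v_t$ pairwise distinct and the $e_t$ pairwise distinct. A hypertree on $[n]$ is a hypergraph on $[n]$ in which any two vertices are joined by a unique simple walk; $\mathcal{HT}_n$ is the set of hypertrees on $[n]$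 (labeled). A hypertree $\Theta$ carries $x_{i,D}$ if for every $d\in D$ and every $j\in[n]\setminus(D\cup\{i\})$ the simple walk in $\Theta$ from $d$ to $j$ passes through the vertex $i$; this depends only on the class of $x_{i,D}$ in $\mathrm{Out}^0(W_n)$. An element $\alpha\in\mathrm{Out}^0(W_n)$ is carried by $\Theta$ if it is a product of partial conjugations each carried by $\Theta$. *)

theory Defs
  imports Main
begin

text \<open>Elements of W_n are modelled by reduced words over the alphabet {1..n}:
  lists of letters with no two adjacent letters equal (the normal form in a free
  product of copies of Z2). The letter j stands for the generator a_j.\<close>

fun reduce :: "nat list \<Rightarrow> nat list" where
  "reduce [] = []"
| "reduce (x # xs) = (case reduce xs of
      [] \<Rightarrow> [x]
    | y # ys \<Rightarrow> (if x = y then ys else x # y # ys))"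

definition reduced_word :: "nat \<Rightarrow> nat list \<Rightarrow> bool" where
  "reduced_word n w \<longleftrightarrow> set w \<subseteq> {1..n} \<and> (\<forall>t. Suc t < length w \<longrightarrow> w ! t \<noteq> w ! Suc t)"

text \<open>Group multiplication; the inverse of a reduced word is its reversal.\<close>
definition wmul :: "nat list \<Rightarrow> nat list \<Rightarrow> nat list" where
  "wmul u v = reduce (u @ v)"

definition pconj :: "nat \<Rightarrow> nat set \<Rightarrow> nat list \<Rightarrow> nat list" where
  "pconj i D w = reduce (concat (map (\<lambda>j. if j \<in> D then [i, j, i] else [j]) w))"

definition is_partial_conj :: "nat \<Rightarrow> nat \<Rightarrow> nat set \<Rightarrow> bool" where
  "is_partial_conj n i D \<longleftrightarrow> i \<in> {1..n} \<and> D \<noteq> {} \<and> D \<subseteq> {1..n} - {i}"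

text \<open>Two automorphisms phi, psi commute in Out(W_n) iff phi \<circ> psi and psi \<circ> phi
  differ by an inner automorphism: phi(psi(u)) = w (psi(phi(u))) w^{-1} for all u.\<close>
definition commute_out :: "nat \<Rightarrow> nat \<Rightarrow> nat set \<Rightarrow> nat \<Rightarrow> nat set \<Rightarrow> bool" where
  "commute_out n i D k F \<longleftrightarrow>
     (\<exists>w. reduced_word n w \<and>
        (\<forall>u. reduced_word n u \<longrightarrow>
           pconj i D (pconj k F u) = wmul w (wmul (pconj k F (pconj i D u)) (rev w))))"

definition hypergraph :: "nat \<Rightarrow> nat set set \<Rightarrow> bool" where
  "hypergraph n E \<longleftrightarrow> (\<forall>e\<in>E. e \<subseteq> {1..n} \<and> card e \<ge> 2)"

text \<open>A simple walk v = v_0, e_1, v_1, ..., e_p, v_p = v': vertex list vs = [v_0..v_p],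
  edge list es = [e_1..e_p].\<close>
definition simple_walk :: "nat set set \<Rightarrow> nat \<Rightarrow> nat \<Rightarrow> nat list \<Rightarrow> nat set list \<Rightarrow> bool" where
  "simple_walk E v v' vs es \<longleftrightarrow>
     length vs = Suc (length es) \<and> hd vs = v \<and> last vs = v' \<and>
     distinct vs \<and> distinct es \<and>
     (\<forall>t < length es. es ! t \<in> E \<and> {vs ! t, vs ! Suc t} \<subseteq> es ! t)"

definition hypertree :: "nat \<Rightarrow> nat set set \<Rightarrow> bool" where
  "hypertree n E \<longleftrightarrow> hypergraph n E \<and>
     (\<forall>v\<in>{1..n}. \<forall>v'\<in>{1..n}. \<exists>!p. simple_walk E v v' (fst p) (snd p))"

text \<open>Theta carries x_{i,D}: for every d in D and j in [n] - (D \<union> {i}), the simple walk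
  from d to j passes through i (in a hypertree this walk is unique).\<close>
definition carries :: "nat \<Rightarrow> nat set set \<Rightarrow> nat \<Rightarrow> nat set \<Rightarrow> bool" where
  "carries n E i D \<longleftrightarrow>
     (\<forall>d\<in>D. \<forall>j\<in>{1..n} - (D \<union> {i}). \<forall>vs es. simple_walk E d j vs es \<longrightarrow> i \<in> set vs)"

end

theory Submission
  imports Defs
begin


fun noadj :: "nat list \<Rightarrow> bool" where
  "noadj (x # y # r) = (x \<noteq> y \<and> noadj (y # r))"
| "noadj _ = True"

definition cons_r :: "nat \<Rightarrow> nat list \<Rightarrow> nat list" where
  "cons_r x l = (case l of [] \<Rightarrow> [x] | y # ys \<Rightarrow> (if x = y then ys else x # y # ys))"

lemma reduce_Cons: "reduce (x # xs) = cons_r x (reduce xs)"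
  by (simp add: cons_r_def)

declare reduce.simps(2)[simp del]

lemma noadj_Cons: "noadj (x # w) \<longleftrightarrow> noadj w \<and> (w = [] \<or> x \<noteq> hd w)"
  by (cases w) auto

lemma noadj_append: "noadj (xs @ ys) \<longleftrightarrow> noadj xs \<and> noadj ys \<and> (xs = [] \<or> ys = [] \<or> last xs \<noteq> hd ys)"
  by (induction xs) (auto simp: noadj_Cons)

lemma noadj_rev[simp]: "noadj (rev w) = noadj w"
  by (induction w) (auto simp: noadj_append noadj_Cons last_rev)

lemma noadj_tl: "noadj (x # w) \<Longrightarrow> noadj w"
  by (simp add: noadj_Cons)

lemma noadj_cons_r: "noadj l \<Longrightarrow> noadj (cons_r x l)"
  by (cases l) (auto simp: cons_r_def noadj_Cons)

lemma noadj_reduce[simp]: "noadj (reduce w)"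
  by (induction w) (auto simp: reduce_Cons noadj_cons_r)

lemma reduce_noadj: "noadj w \<Longrightarrow> reduce w = w"
proof (induction w)
  case (Cons x xs)
  then show ?case by (cases xs) (auto simp: reduce_Cons cons_r_def noadj_Cons)
qed simp

lemma reduce_reduce[simp]: "reduce (reduce w) = reduce w"
  by (simp add: reduce_noadj)

lemma set_cons_r: "set (cons_r x l) \<subseteq> insert x (set l)"
  by (cases l) (auto simp: cons_r_def)

lemma set_reduce: "set (reduce w) \<subseteq> set w"
  by (induction w) (use set_cons_r in \<open>fastforce simp: reduce_Cons\<close>)+

lemma cons_r_cons_r: "noadj l \<Longrightarrow> cons_r x (cons_r x l) = l"
  by (cases l rule: noadj.cases) (auto simp: cons_r_def)

lemma reduce_append_right[simp]: "reduce (a @ reduce b) = reduce (a @ b)"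
  by (induction a) (auto simp: reduce_Cons)

lemma reduce_cons_r_append: "noadj r \<Longrightarrow> reduce (cons_r x r @ b) = cons_r x (reduce (r @ b))"
proof (cases r)
  case Nil then show ?thesis by (simp add: reduce_Cons cons_r_def)
next
  case (Cons y ys)
  assume "noadj r"
  show ?thesis
  proof (cases "x = y")
    case True
    have "noadj (reduce (ys @ b))" by simp
    have c1: "cons_r x r = ys" using Cons True by (simp add: cons_r_def)
    have "reduce (r @ b) = cons_r x (reduce (ys @ b))" using Cons True by (simp add: reduce_Cons)
    then show ?thesis using c1 cons_r_cons_r[OF \<open>noadj (reduce (ys @ b))\<close>, of x] by simp
  next
    case False then show ?thesis using Cons by (simp add: cons_r_def reduce_Cons)
  qed
qed

lemma reduce_append_left[simp]: "reduce (reduce a @ b) = reduce (a @ b)"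
proof (induction a)
  case (Cons x a)
  have "reduce (reduce (x # a) @ b) = reduce (cons_r x (reduce a) @ b)" by (simp add: reduce_Cons)
  also have "\<dots> = cons_r x (reduce (reduce a @ b))" by (simp add: reduce_cons_r_append)
  also have "\<dots> = reduce ((x # a) @ b)" using Cons by (simp add: reduce_Cons)
  finally show ?case .
qed simp

lemma reduce_cancel2: "reduce (a @ x # x # b) = reduce (a @ b)"
proof (induction a)
  case Nil
  show ?case by (simp add: reduce_Cons cons_r_cons_r)
qed (simp add: reduce_Cons)

lemma reduce_cancel: "reduce (a @ y @ rev y @ b) = reduce (a @ b)"
proof (induction y arbitrary: a b)
  case (Cons z y)
  have "reduce (a @ (z # y) @ rev (z # y) @ b) = reduce ((a @ [z]) @ y @ rev y @ (z # b))" by simp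
  also have "\<dots> = reduce ((a @ [z]) @ z # b)" by (rule Cons)
  also have "\<dots> = reduce (a @ b)" using reduce_cancel2[of a z b] by simp
  finally show ?case .
qed simp

lemma reduce_cancel': "reduce (a @ rev y @ y @ b) = reduce (a @ b)"
  using reduce_cancel[of a "rev y" b] by simp

lemma reduce_cancel_end: "reduce (a @ y @ rev y) = reduce a"
  using reduce_cancel[of a y "[]"] by simp

lemma reduce_cancel_end': "reduce (a @ rev y @ y) = reduce a"
  using reduce_cancel[of a "rev y" "[]"] by simp

lemma reduce_rev_snoc: "noadj r \<Longrightarrow> reduce (rev r @ [x]) = rev (cons_r x r)"
proof (cases r)
  case Nil then show ?thesis by (simp add: reduce_Cons cons_r_def)
next
  case (Cons y ys)
  assume na: "noadj r"
  show ?thesis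
  proof (cases "x = y")
    case True
    have "reduce (rev ys @ [y, y]) = reduce (rev ys)" using reduce_cancel2[of "rev ys" y "[]"] by simp
    also have "\<dots> = rev ys" using na Cons by (simp add: reduce_noadj noadj_Cons)
    finally show ?thesis using True Cons by (simp add: cons_r_def)
  next
    case False
    have "noadj (x # y # ys)" using na Cons False by (simp add: noadj_Cons)
    then have "noadj (rev (x # y # ys))" by (simp only: noadj_rev)
    then show ?thesis using False Cons by (simp add: cons_r_def reduce_noadj)
  qed
qed

lemma reduce_rev: "reduce (rev w) = rev (reduce w)"
proof (induction w)
  case (Cons x w)
  have "reduce (rev (x # w)) = reduce (reduce (rev w) @ [x])" by simp
  also have "\<dots> = reduce (rev (reduce w) @ [x])" using Cons by simp
  also have "\<dots> = rev (cons_r x (reduce w))" by (simp add: reduce_rev_snoc)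
  finally show ?case by (simp add: reduce_Cons)
qed simp

lemma rev_reduce[simp]: "rev (reduce w) = reduce (rev w)"
  by (simp add: reduce_rev)

lemma reduce_append_mid[simp]: "reduce (a @ reduce b @ c) = reduce (a @ b @ c)"
  by (metis reduce_append_left reduce_append_right)

lemma noadj_iff: "noadj w \<longleftrightarrow> (\<forall>t. Suc t < length w \<longrightarrow> w ! t \<noteq> w ! Suc t)"
proof (induction w rule: noadj.induct)
  case (1 x y r)
  show ?case
  proof
    assume "noadj (x # y # r)"
    then show "\<forall>t. Suc t < length (x # y # r) \<longrightarrow> (x # y # r) ! t \<noteq> (x # y # r) ! Suc t"
      using 1 by (auto simp: nth_Cons split: nat.splits)
  next
    assume h: "\<forall>t. Suc t < length (x # y # r) \<longrightarrow> (x # y # r) ! t \<noteq> (x # y # r) ! Suc t"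
    have "x \<noteq> y" using h[rule_format, of 0] by simp
    moreover have "\<forall>t. Suc t < length (y # r) \<longrightarrow> (y # r) ! t \<noteq> (y # r) ! Suc t"
      using h by (metis Suc_less_eq length_Cons nth_Cons_Suc)
    ultimately show "noadj (x # y # r)" using 1 by simp
  qed
qed auto

lemma reduced_word_iff: "reduced_word n w \<longleftrightarrow> set w \<subseteq> {1..n} \<and> noadj w"
  by (simp add: reduced_word_def noadj_iff)



definition sig :: "nat \<Rightarrow> nat set \<Rightarrow> nat list \<Rightarrow> nat list" where
  "sig i D u = concat (map (\<lambda>j. if j \<in> D then [i, j, i] else [j]) u)"

lemma pconj_sig: "pconj i D u = reduce (sig i D u)"
  by (simp add: pconj_def sig_def)

lemma sig_Nil[simp]: "sig i D [] = []" by (simp add: sig_def)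
lemma sig_Cons: "sig i D (x # u) = (if x \<in> D then [i, x, i] else [x]) @ sig i D u"
  by (simp add: sig_def)
lemma sig_append[simp]: "sig i D (a @ b) = sig i D a @ sig i D b" by (simp add: sig_def)
lemma sig_single: "sig i D [x] = (if x \<in> D then [i, x, i] else [x])" by (simp add: sig_def)

lemma sig_rev[simp]: "sig i D (rev u) = rev (sig i D u)"
  by (induction u) (auto simp: sig_Cons)

lemma set_sig: "set (sig i D u) \<subseteq> insert i (set u)"
  by (induction u) (auto simp: sig_Cons)

lemma reduce_cc[simp]: "reduce (x # x # b) = reduce b"
  using reduce_cancel2[of "[]" x b] by simp

lemma reduce_zcc[simp]: "reduce (z # x # x # b) = reduce (z # b)"
  by (simp add: reduce_Cons cons_r_cons_r)

lemma reduce_sig_cons_r: "noadj r \<Longrightarrow> reduce (sig i D (cons_r x r)) = reduce (sig i D [x] @ sig i D r)"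
proof (cases r)
  case Nil then show ?thesis by (simp add: cons_r_def)
next
  case (Cons y ys)
  show ?thesis
  proof (cases "x = y")
    case True
    have "reduce (sig i D [x] @ sig i D r) = reduce ([] @ sig i D [x] @ rev (sig i D [x]) @ sig i D ys)"
      using Cons True by (simp add: sig_single sig_Cons)
    also have "\<dots> = reduce (sig i D ys)" by (simp only: reduce_cancel) simp
    finally show ?thesis using Cons True by (simp add: cons_r_def)
  next
    case False then show ?thesis using Cons by (simp add: cons_r_def sig_Cons sig_single)
  qed
qed

lemma reduce_sig_reduce0: "reduce (sig i D (reduce u)) = reduce (sig i D u)"
proof (induction u)
  case (Cons x u)
  have "reduce (sig i D (reduce (x # u))) = reduce (sig i D [x] @ sig i D (reduce u))"
    by (simp add: reduce_Cons reduce_sig_cons_r)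
  also have "\<dots> = reduce (sig i D [x] @ reduce (sig i D (reduce u)))" by simp
  also have "\<dots> = reduce (sig i D [x] @ sig i D u)" using Cons by simp
  finally show ?case by (simp add: sig_Cons sig_single)
qed simp

lemma reduce_sig_reduce[simp]:
  "reduce (sig i D (reduce u)) = reduce (sig i D u)"
  "reduce (a @ sig i D (reduce u)) = reduce (a @ sig i D u)"
  "reduce (sig i D (reduce u) @ b) = reduce (sig i D u @ b)"
  "reduce (a @ sig i D (reduce u) @ b) = reduce (a @ sig i D u @ b)"
  by (metis reduce_sig_reduce0 reduce_append_left reduce_append_right reduce_append_mid)+

lemma sig_comm:
  assumes "\<And>j. sig i D (sig k F [j]) = sig k F (sig i D [j])"
  shows "sig i D (sig k F u) = sig k F (sig i D u)"
proof (induction u)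
  case (Cons x u)
  have "sig i D (sig k F (x # u)) = sig i D (sig k F [x]) @ sig i D (sig k F u)"
    by (simp add: sig_Cons sig_single)
  also have "\<dots> = sig k F (sig i D [x]) @ sig k F (sig i D u)" using Cons assms by simp
  finally show ?case by (simp add: sig_Cons sig_single)
qed simp

lemma sig_comm_same:
  assumes "i \<notin> D" "i \<notin> F"
  shows "sig i D (sig i F u) = sig i F (sig i D u)"
  by (rule sig_comm) (use assms in \<open>auto simp: sig_Cons sig_single\<close>)

lemma sig_comm_diff:
  assumes "i \<noteq> k" "i \<notin> F" "k \<notin> D" "D \<inter> F = {}"
  shows "sig i D (sig k F u) = sig k F (sig i D u)"
  by (rule sig_comm) (use assms in \<open>auto simp: sig_Cons sig_single\<close>)

lemma sig_compl_letter:
  assumes "x \<in> V" "D \<subseteq> V - {i}"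
  shows "reduce (i # sig i D [x] @ i # Y) = reduce (sig i (V - {i} - D) [x] @ Y)"
  using assms by (auto simp: sig_single)

lemma sig_compl:
  assumes "set u \<subseteq> V" "D \<subseteq> V - {i}"
  shows "reduce (sig i (V - {i} - D) u) = reduce ([i] @ sig i D u @ [i])"
  using assms(1)
proof (induction u)
  case Nil then show ?case by simp
next
  case (Cons x u)
  have e: "sig i D (x # u) = sig i D [x] @ sig i D u" by (simp add: sig_Cons)
  have "reduce ([i] @ sig i D (x # u) @ [i]) = reduce ((i # sig i D [x]) @ (sig i D u @ [i]))"
    by (simp add: e)
  also have "\<dots> = reduce ((i # sig i D [x]) @ i # i # (sig i D u @ [i]))"
    by (rule reduce_cancel2[symmetric])
  also have "\<dots> = reduce (i # sig i D [x] @ i # reduce (i # sig i D u @ [i]))"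
    using reduce_append_right[of "i # sig i D [x] @ [i]" "i # sig i D u @ [i]"] by simp
  also have "\<dots> = reduce (i # sig i D [x] @ i # reduce (sig i (V - {i} - D) u))"
    using Cons by simp
  also have "\<dots> = reduce (i # sig i D [x] @ i # sig i (V - {i} - D) u)"
    using reduce_append_right[of "i # sig i D [x] @ [i]" "sig i (V - {i} - D) u"] by simp
  also have "\<dots> = reduce (sig i (V - {i} - D) [x] @ sig i (V - {i} - D) u)"
    using sig_compl_letter[of x V D i] Cons.prems assms(2) by simp
  finally show ?case by (simp add: sig_Cons sig_single)
qed



lemma reduce_single[simp]: "reduce [x] = [x]"
  by (simp add: reduce_Cons cons_r_def)

lemma cancel_simps:
  "reduce (a @ rev y @ y @ c) = reduce (a @ c)"
  "reduce (a @ b @ rev y @ y @ c) = reduce (a @ b @ c)"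
  "reduce (a @ b @ rev y @ y) = reduce (a @ b)"
  "reduce (rev y @ y @ c) = reduce c"
  "reduce (a @ y @ rev y @ c) = reduce (a @ c)"
  "reduce (a @ b @ y @ rev y @ c) = reduce (a @ b @ c)"
  "reduce (a @ b @ y @ rev y) = reduce (a @ b)"
  "reduce (y @ rev y @ c) = reduce c"
  "reduce (a @ rev y @ y) = reduce a"
  "reduce (a @ y @ rev y) = reduce a"
  using reduce_cancel_end[of a y] reduce_cancel_end'[of a y]
  using reduce_cancel'[of a y c] reduce_cancel'[of "a @ b" y c] reduce_cancel'[of "a @ b" y "[]"]
    reduce_cancel'[of "[]" y c]
  using reduce_cancel[of a y c] reduce_cancel[of "a @ b" y c] reduce_cancel[of "a @ b" y "[]"]
    reduce_cancel[of "[]" y c]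
  by simp_all

definition side :: "nat set \<Rightarrow> nat \<Rightarrow> nat set \<Rightarrow> nat \<Rightarrow> nat set" where
  "side V i D k = (if k \<in> D then V - {i} - D else D)"

definition pc_compat :: "nat set \<Rightarrow> nat \<Rightarrow> nat set \<Rightarrow> nat \<Rightarrow> nat set \<Rightarrow> bool" where
  "pc_compat V i D k F \<longleftrightarrow> i = k \<or> side V i D k \<inter> side V k F i = {}"

lemma side_sub: "D \<subseteq> V - {i} \<Longrightarrow> side V i D k \<subseteq> V - {i}"
  by (auto simp: side_def)

lemma side_notin: "k \<notin> side V i D k"
  by (auto simp: side_def)

lemma rep:
  assumes "i \<in> V" "D \<subseteq> V - {i}"
  shows "\<exists>a. set a \<subseteq> V \<and> (\<forall>u. set u \<subseteq> V \<longrightarrow>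
           reduce (sig i D u) = reduce (a @ sig i (side V i D k) u @ rev a))"
proof (cases "k \<in> D")
  case True
  have DD: "D = V - {i} - (V - {i} - D)" using assms by auto
  have "\<forall>u. set u \<subseteq> V \<longrightarrow> reduce (sig i D u) = reduce ([i] @ sig i (side V i D k) u @ rev [i])"
  proof (intro allI impI)
    fix u assume "set u \<subseteq> V"
    then have "reduce (sig i (V - {i} - (V - {i} - D)) u) = reduce ([i] @ sig i (V - {i} - D) u @ [i])"
      by (intro sig_compl) auto
    then show "reduce (sig i D u) = reduce ([i] @ sig i (side V i D k) u @ rev [i])"
      using True DD by (simp add: side_def)
  qed
  then show ?thesis using assms by (intro exI[of _ "[i]"]) auto
next
  case False
  then show ?thesis by (intro exI[of _ "[]"]) (simp add: side_def)
qed

lemma set_pconj: "set (pconj i D u) \<subseteq> insert i (set u)"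
  using set_reduce set_sig by (metis pconj_sig subset_trans)

lemma comp_form:
  assumes "i \<in> V" "k \<in> V" "D \<subseteq> V - {i}" "F \<subseteq> V - {k}"
  shows "\<exists>g h. set g \<subseteq> V \<and> set h \<subseteq> V \<and> (\<forall>u. set u \<subseteq> V \<longrightarrow>
     pconj i D (pconj k F u) = reduce (g @ sig i (side V i D k) (sig k (side V k F i) u) @ rev g) \<and>
     pconj k F (pconj i D u) = reduce (h @ sig k (side V k F i) (sig i (side V i D k) u) @ rev h))"
proof -
  define Do where "Do = side V i D k"
  define Fo where "Fo = side V k F i"
  obtain a where a: "set a \<subseteq> V" "\<And>u. set u \<subseteq> V \<Longrightarrow> reduce (sig i D u) = reduce (a @ sig i Do u @ rev a)"
    using rep[OF assms(1,3), of k] Do_def by blast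
  obtain b where b: "set b \<subseteq> V" "\<And>u. set u \<subseteq> V \<Longrightarrow> reduce (sig k F u) = reduce (b @ sig k Fo u @ rev b)"
    using rep[OF assms(2,4), of i] Fo_def by blast
  have sg: "set (sig i Do b) \<subseteq> V" "set (sig k Fo a) \<subseteq> V"
    using set_sig[of i Do b] set_sig[of k Fo a] a(1) b(1) assms(1,2) by auto
  have ss: "set (sig k F u) \<subseteq> V" "set (sig i D u) \<subseteq> V" if "set u \<subseteq> V" for u
    using set_sig[of k F u] set_sig[of i D u] that assms(1,2) by auto
  have e1: "pconj i D (pconj k F u) = reduce ((a @ sig i Do b) @ sig i Do (sig k Fo u) @ rev (a @ sig i Do b))"
    if u: "set u \<subseteq> V" for u
  proof -
    have "pconj i D (pconj k F u) = reduce (sig i D (sig k F u))" by (simp add: pconj_sig)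
    also have "\<dots> = reduce (a @ sig i Do (sig k F u) @ rev a)" using a(2)[OF ss(1)[OF u]] .
    also have "\<dots> = reduce (a @ sig i Do (reduce (sig k F u)) @ rev a)" by simp
    also have "\<dots> = reduce (a @ sig i Do (reduce (b @ sig k Fo u @ rev b)) @ rev a)" using b(2)[OF u] by simp
    also have "\<dots> = reduce ((a @ sig i Do b) @ sig i Do (sig k Fo u) @ rev (a @ sig i Do b))" by simp
    finally show ?thesis .
  qed
  have e2: "pconj k F (pconj i D u) = reduce ((b @ sig k Fo a) @ sig k Fo (sig i Do u) @ rev (b @ sig k Fo a))"
    if u: "set u \<subseteq> V" for u
  proof -
    have "pconj k F (pconj i D u) = reduce (sig k F (sig i D u))" by (simp add: pconj_sig)
    also have "\<dots> = reduce (b @ sig k Fo (sig i D u) @ rev b)" using b(2)[OF ss(2)[OF u]] .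
    also have "\<dots> = reduce (b @ sig k Fo (reduce (sig i D u)) @ rev b)" by simp
    also have "\<dots> = reduce (b @ sig k Fo (reduce (a @ sig i Do u @ rev a)) @ rev b)" using a(2)[OF u] by simp
    also have "\<dots> = reduce ((b @ sig k Fo a) @ sig k Fo (sig i Do u) @ rev (b @ sig k Fo a))" by simp
    finally show ?thesis .
  qed
  have s1: "set (a @ sig i Do b) \<subseteq> V" "set (b @ sig k Fo a) \<subseteq> V" using a(1) b(1) sg by auto
  show ?thesis
    apply (rule exI[of _ "a @ sig i Do b"], rule exI[of _ "b @ sig k Fo a"])
    using s1 e1 e2 unfolding Do_def Fo_def by blast
qed

lemma compat_commute:
  assumes "i \<in> {1..n}" "k \<in> {1..n}" "D \<subseteq> {1..n} - {i}" "F \<subseteq> {1..n} - {k}"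
    and "pc_compat {1..n} i D k F"
  shows "commute_out n i D k F"
proof (cases "i = k")
  case True
  have "i \<notin> D" "i \<notin> F" using assms True by auto
  then show ?thesis unfolding commute_out_def
    by (intro exI[of _ "[]"]) (simp add: reduced_word_iff pconj_sig wmul_def True sig_comm_same)
next
  case False
  let ?V = "{1..n::nat}"
  define Do where "Do = side ?V i D k"
  define Fo where "Fo = side ?V k F i"
  have dj: "Do \<inter> Fo = {}" using assms(5) False by (simp add: pc_compat_def Do_def Fo_def)
  have "k \<notin> Do" "i \<notin> Fo" by (simp_all add: Do_def Fo_def side_notin)
  then have cm: "sig i Do (sig k Fo u) = sig k Fo (sig i Do u)" for u
    using sig_comm_diff[OF False _ _ dj] by blast
  obtain g h where gh: "set g \<subseteq> ?V" "set h \<subseteq> ?V"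
    "\<And>u. set u \<subseteq> ?V \<Longrightarrow> pconj i D (pconj k F u) = reduce (g @ sig i Do (sig k Fo u) @ rev g)"
    "\<And>u. set u \<subseteq> ?V \<Longrightarrow> pconj k F (pconj i D u) = reduce (h @ sig k Fo (sig i Do u) @ rev h)"
    using comp_form[OF assms(1-4)] Do_def Fo_def by blast
  show ?thesis unfolding commute_out_def
  proof (intro exI[of _ "reduce (g @ rev h)"] conjI allI impI)
    show "reduced_word n (reduce (g @ rev h))"
      using set_reduce[of "g @ rev h"] gh(1,2) by (auto simp: reduced_word_iff)
  next
    fix u assume "reduced_word n u"
    then have u: "set u \<subseteq> ?V" by (simp add: reduced_word_iff)
    show "pconj i D (pconj k F u) = wmul (reduce (g @ rev h)) (wmul (pconj k F (pconj i D u)) (rev (reduce (g @ rev h))))"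
      unfolding gh(3)[OF u] gh(4)[OF u] wmul_def by (simp add: cm cancel_simps)
  qed
qed

lemma reduce_conj_noadj:
  assumes "noadj c" "c \<noteq> []" "last c \<noteq> x"
  shows "reduce (c @ [x] @ rev c) = c @ [x] @ rev c"
  using assms by (intro reduce_noadj) (auto simp: noadj_append hd_rev noadj_Cons)

lemma centralizer:
  assumes "noadj c" "reduce (c @ [x] @ rev c) = [x]"
  shows "c = [] \<or> c = [x]"
proof (cases c rule: rev_exhaust)
  case Nil then show ?thesis by simp
next
  case (snoc c0 y)
  show ?thesis
  proof (cases "y = x")
    case False
    then have "reduce (c @ [x] @ rev c) = c @ [x] @ rev c"
      using assms(1) snoc by (intro reduce_conj_noadj) auto
    then show ?thesis using assms(2) snoc by simp
  next
    case True
    have e: "reduce (c @ [x] @ rev c) = reduce (c0 @ [x] @ rev c0)"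
      using snoc True reduce_cancel2[of c0 x "[x] @ rev c0"] by simp
    show ?thesis
    proof (cases "c0 = []")
      case True then show ?thesis using snoc \<open>y = x\<close> by simp
    next
      case False
      have "noadj c0" "last c0 \<noteq> x" using assms(1) snoc \<open>y = x\<close> False by (auto simp: noadj_append)
      then have "reduce (c0 @ [x] @ rev c0) = c0 @ [x] @ rev c0"
        using False by (intro reduce_conj_noadj)
      then have "[x] = c0 @ [x] @ rev c0" using assms(2) e by simp
      then show ?thesis using False by (cases c0) auto
    qed
  qed
qed

lemma commute_compat:
  assumes "i \<in> {1..n}" "k \<in> {1..n}" "D \<subseteq> {1..n} - {i}" "F \<subseteq> {1..n} - {k}"
    and "commute_out n i D k F"
  shows "pc_compat {1..n} i D k F"
proof (rule ccontr)
  let ?V = "{1..n::nat}"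
  assume nc: "\<not> pc_compat ?V i D k F"
  define Do where "Do = side ?V i D k"
  define Fo where "Fo = side ?V k F i"
  have ik: "i \<noteq> k" using nc by (auto simp: pc_compat_def)
  obtain d where d: "d \<in> Do" "d \<in> Fo" using nc by (auto simp: pc_compat_def Do_def Fo_def)
  have kD: "k \<notin> Do" "i \<notin> Fo" by (simp_all add: Do_def Fo_def side_notin)
  have iD: "i \<notin> Do" "k \<notin> Fo" using side_sub[OF assms(3), of k] side_sub[OF assms(4), of i]
    by (auto simp: Do_def Fo_def)
  have dV: "d \<in> ?V" using d side_sub[OF assms(3), of k] by (auto simp: Do_def)
  have dik: "d \<noteq> i" "d \<noteq> k" using d kD iD by auto
  obtain g h where gh:
    "\<And>u. set u \<subseteq> ?V \<Longrightarrow> pconj i D (pconj k F u) = reduce (g @ sig i Do (sig k Fo u) @ rev g)"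
    "\<And>u. set u \<subseteq> ?V \<Longrightarrow> pconj k F (pconj i D u) = reduce (h @ sig k Fo (sig i Do u) @ rev h)"
    using comp_form[OF assms(1-4)] Do_def Fo_def by blast
  obtain w where w: "reduced_word n w" "\<And>u. reduced_word n u \<Longrightarrow>
           pconj i D (pconj k F u) = wmul w (wmul (pconj k F (pconj i D u)) (rev w))"
    using assms(5) unfolding commute_out_def by blast
  define c where "c = reduce (rev g @ w @ h)"
  have key: "reduce (sig i Do (sig k Fo u)) = reduce (c @ sig k Fo (sig i Do u) @ rev c)"
    if "reduced_word n u" for u
  proof -
    have u: "set u \<subseteq> ?V" using that by (simp add: reduced_word_iff)
    have E: "reduce (g @ sig i Do (sig k Fo u) @ rev g) = reduce (w @ h @ sig k Fo (sig i Do u) @ rev h @ rev w)"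
      using w(2)[OF that] gh[OF u] by (simp add: wmul_def)
    have "reduce (sig i Do (sig k Fo u)) = reduce (rev g @ reduce (g @ sig i Do (sig k Fo u) @ rev g) @ g)"
      by (simp add: cancel_simps)
    also have "\<dots> = reduce (rev g @ reduce (w @ h @ sig k Fo (sig i Do u) @ rev h @ rev w) @ g)"
      using E by simp
    also have "\<dots> = reduce (c @ sig k Fo (sig i Do u) @ rev c)"
      using reduce_append_right[of "rev g @ w @ h @ sig k Fo (sig i Do u)" "rev h @ rev w @ g"]
      by (simp add: c_def)
    finally show ?thesis .
  qed
  have nc: "noadj c" by (simp add: c_def)
  have ri: "reduced_word n [i]" using assms(1) by (simp add: reduced_word_iff)
  have s1: "sig i Do (sig k Fo [i]) = [i]" "sig k Fo (sig i Do [i]) = [i]"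
    using kD iD by (simp_all add: sig_single)
  have "reduce [i] = reduce (c @ [i] @ rev c)"
    using key[OF ri] unfolding s1 .
  then have c1: "c = [] \<or> c = [i]" by (intro centralizer[OF nc]) (metis reduce_single)
  have rk: "reduced_word n [k]" using assms(2) by (simp add: reduced_word_iff)
  have s2: "sig i Do (sig k Fo [k]) = [k]" "sig k Fo (sig i Do [k]) = [k]"
    using kD iD by (simp_all add: sig_single)
  have "reduce [k] = reduce (c @ [k] @ rev c)"
    using key[OF rk] unfolding s2 .
  then have c2: "c = [] \<or> c = [k]" by (intro centralizer[OF nc]) (metis reduce_single)
  have c0: "c = []" using c1 c2 ik by auto
  have "reduce [k, i, d, i, k] = reduce [i, k, d, k, i]"
    using key[of "[d]"] dV d kD iD c0 by (simp add: reduced_word_iff sig_single sig_Cons)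
  moreover have "reduce [k, i, d, i, k] = [k, i, d, i, k]" "reduce [i, k, d, k, i] = [i, k, d, k, i]"
    using ik dik by (auto intro!: reduce_noadj)
  ultimately show False using ik by simp
qed



definition hypertreeV :: "nat set \<Rightarrow> nat set set \<Rightarrow> bool" where
  "hypertreeV V E \<longleftrightarrow> (\<forall>e\<in>E. e \<subseteq> V \<and> card e \<ge> 2) \<and>
     (\<forall>v\<in>V. \<forall>v'\<in>V. \<exists>!p. simple_walk E v v' (fst p) (snd p))"

definition carriesV :: "nat set \<Rightarrow> nat set set \<Rightarrow> nat \<Rightarrow> nat set \<Rightarrow> bool" where
  "carriesV V E i D \<longleftrightarrow>
     (\<forall>d\<in>D. \<forall>j\<in>V - (D \<union> {i}). \<forall>vs es. simple_walk E d j vs es \<longrightarrow> i \<in> set vs)"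

lemma hypertree_V: "hypertree n E = hypertreeV {1..n} E"
  by (simp add: hypertree_def hypertreeV_def hypergraph_def)

lemma carries_V: "carries n E i D = carriesV {1..n} E i D"
  by (simp add: carries_def carriesV_def)

lemma sw_basic:
  assumes "simple_walk E v v' vs es"
  shows "length vs = Suc (length es)" "vs ! 0 = v" "vs ! length es = v'" "distinct vs" "distinct es"
    "\<And>t. t < length es \<Longrightarrow> es ! t \<in> E \<and> vs ! t \<in> es ! t \<and> vs ! Suc t \<in> es ! t"
proof -
  have ne: "vs \<noteq> []" using assms unfolding simple_walk_def by auto
  show "length vs = Suc (length es)" "vs ! 0 = v" "vs ! length es = v'" "distinct vs" "distinct es"
    "\<And>t. t < length es \<Longrightarrow> es ! t \<in> E \<and> vs ! t \<in> es ! t \<and> vs ! Suc t \<in> es ! t"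
    using assms ne unfolding simple_walk_def by (auto simp: hd_conv_nth last_conv_nth)
qed

lemma sw_intro:
  assumes "length vs = Suc (length es)" "vs ! 0 = v" "vs ! length es = v'" "distinct vs" "distinct es"
    "\<And>t. t < length es \<Longrightarrow> es ! t \<in> E \<and> vs ! t \<in> es ! t \<and> vs ! Suc t \<in> es ! t"
  shows "simple_walk E v v' vs es"
proof -
  have "vs \<noteq> []" using assms(1) by auto
  then show ?thesis using assms unfolding simple_walk_def
    by (auto simp: hd_conv_nth last_conv_nth)
qed

lemma sw_rev:
  assumes "simple_walk E v v' vs es"
  shows "simple_walk E v' v (rev vs) (rev es)"
proof -
  note b = sw_basic[OF assms]
  let ?L = "length es"
  show ?thesis
  proof (rule sw_intro)
    show "length (rev vs) = Suc (length (rev es))" using b by simp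
    show "rev vs ! 0 = v'" using b by (simp add: rev_nth)
    show "rev vs ! length (rev es) = v" using b by (simp add: rev_nth)
    show "distinct (rev vs)" "distinct (rev es)" using b by simp_all
  next
    fix t assume t: "t < length (rev es)"
    define s where "s = ?L - Suc t"
    have s: "s < ?L" "Suc s = ?L - t" using t by (auto simp: s_def)
    have "rev es ! t = es ! s" using t by (simp add: rev_nth s_def)
    moreover have "rev vs ! t = vs ! Suc s" using t b(1) s by (simp add: rev_nth)
    moreover have "rev vs ! Suc t = vs ! s" using t b(1) by (simp add: rev_nth s_def)
    ultimately show "rev es ! t \<in> E \<and> rev vs ! t \<in> rev es ! t \<and> rev vs ! Suc t \<in> rev es ! t"
      using b(6)[OF s(1)] by simp
  qed
qed

lemma sw_mono: "simple_walk E v v' vs es \<Longrightarrow> E \<subseteq> E' \<Longrightarrow> simple_walk E' v v' vs es"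
  unfolding simple_walk_def by auto

lemma sw_split:
  assumes "simple_walk E v v' vs es" "s \<le> length es" "vs ! s = x"
  shows "simple_walk E v x (take (Suc s) vs) (take s es)"
    "simple_walk E x v' (drop s vs) (drop s es)"
proof -
  note b = sw_basic[OF assms(1)]
  show "simple_walk E v x (take (Suc s) vs) (take s es)"
    by (rule sw_intro) (use b assms(2,3) in auto)
  show "simple_walk E x v' (drop s vs) (drop s es)"
  proof (rule sw_intro)
    show "length (drop s vs) = Suc (length (drop s es))" using b assms(2) by simp
    show "drop s vs ! 0 = x" using b assms by simp
    show "drop s vs ! length (drop s es) = v'" using b assms by simp
    show "distinct (drop s vs)" "distinct (drop s es)" using b by simp_all
  next
    fix t assume "t < length (drop s es)"
    then show "drop s es ! t \<in> E \<and> drop s vs ! t \<in> drop s es ! t \<and> drop s vs ! Suc t \<in> drop s es ! t"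
      using b(6)[of "s + t"] b(1) assms(2) by auto
  qed
qed

lemma sw_set:
  assumes "simple_walk E v v' vs es" "\<forall>e\<in>E. e \<subseteq> V" "v \<in> V"
  shows "set vs \<subseteq> V"
proof
  fix x assume "x \<in> set vs"
  then obtain t where t: "t < length vs" "vs ! t = x" by (auto simp: in_set_conv_nth)
  note b = sw_basic[OF assms(1)]
  show "x \<in> V"
  proof (cases t)
    case 0 then show ?thesis using t b assms by simp
  next
    case (Suc t') then show ?thesis using t b(1) b(6)[of t'] assms(2) by auto
  qed
qed

section \<open>Gluing\<close>

locale glue =
  fixes A B :: "nat set" and E1 E2 :: "nat set set" and i :: nat
  assumes E1A: "\<forall>e\<in>E1. e \<subseteq> A" and E2B: "\<forall>e\<in>E2. e \<subseteq> B" and AB: "A \<inter> B \<subseteq> {i}"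
begin

lemma step_in:
  assumes "simple_walk (E1 \<union> E2) v v' vs es" "t < length es" "vs ! t \<in> A" "vs ! t \<noteq> i"
  shows "vs ! Suc t \<in> A \<and> es ! t \<in> E1"
proof -
  note b = sw_basic[OF assms(1)]
  have "es ! t \<notin> E2"
  proof
    assume "es ! t \<in> E2"
    then have "vs ! t \<in> B" using b(6)[OF assms(2)] E2B by auto
    then show False using assms(3,4) AB by auto
  qed
  then have "es ! t \<in> E1" using b(6)[OF assms(2)] by auto
  then show ?thesis using b(6)[OF assms(2)] E1A by auto
qed

lemma stay_fwd:
  assumes "simple_walk (E1 \<union> E2) v v' vs es" "vs ! p \<in> A" "p \<le> q" "q \<le> length es"
    "\<forall>r. p \<le> r \<and> r < q \<longrightarrow> vs ! r \<noteq> i"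
  shows "vs ! q \<in> A"
  using assms(3-5)
proof (induction q)
  case 0 then show ?case using assms(2) by simp
next
  case (Suc q)
  show ?case
  proof (cases "p = Suc q")
    case True then show ?thesis using assms(2) by simp
  next
    case False
    then have "p \<le> q" using Suc by simp
    then have "vs ! q \<in> A" using Suc by simp
    moreover have "vs ! q \<noteq> i" using Suc \<open>p \<le> q\<close> by simp
    ultimately show ?thesis using step_in[OF assms(1)] Suc by simp
  qed
qed

lemma stay_bwd:
  assumes "simple_walk (E1 \<union> E2) v v' vs es" "vs ! p \<in> A" "q \<le> p" "p \<le> length es"
    "\<forall>r. q < r \<and> r \<le> p \<longrightarrow> vs ! r \<noteq> i"
  shows "vs ! q \<in> A"
proof -
  note b = sw_basic[OF assms(1)]
  have rw: "simple_walk (E1 \<union> E2) v' v (rev vs) (rev es)" by (rule sw_rev[OF assms(1)])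
  let ?L = "length es"
  have ix: "rev vs ! (?L - r) = vs ! r" if "r \<le> ?L" for r
    using that b(1) by (simp add: rev_nth Suc_diff_le)
  have "rev vs ! (?L - q) \<in> A"
  proof (rule stay_fwd[OF rw, of "?L - p"])
    show "rev vs ! (?L - p) \<in> A" using ix assms(2,4) by simp
    show "?L - p \<le> ?L - q" using assms by simp
    show "?L - q \<le> length (rev es)" by simp
    show "\<forall>r. ?L - p \<le> r \<and> r < ?L - q \<longrightarrow> rev vs ! r \<noteq> i"
    proof (intro allI impI)
      fix r assume r: "?L - p \<le> r \<and> r < ?L - q"
      have "?L - (?L - r) = r" using r by linarith
      then have "rev vs ! r = vs ! (?L - r)" using ix[of "?L - r"] by simp
      moreover have "q < ?L - r \<and> ?L - r \<le> p" using r assms(3,4) by auto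
      ultimately show "rev vs ! r \<noteq> i" using assms(5) by simp
    qed
  qed
  then show ?thesis using ix assms(3,4) by simp
qed

lemma cross:
  assumes "simple_walk (E1 \<union> E2) v v' vs es" "v \<in> A" "v' \<notin> A"
  shows "\<exists>s \<le> length es. vs ! s = i"
proof (rule ccontr)
  assume "\<not> ?thesis"
  then have "vs ! length es \<in> A"
    using stay_fwd[OF assms(1), of 0 "length es"] sw_basic[OF assms(1)] assms(2) by auto
  then show False using sw_basic(3)[OF assms(1)] assms(3) by simp
qed

lemma inside:
  assumes "simple_walk (E1 \<union> E2) v v' vs es" "v \<in> A" "v' \<in> A"
  shows "simple_walk E1 v v' vs es"
proof -
  note b = sw_basic[OF assms(1)]
  let ?L = "length es"
  have allA: "vs ! q \<in> A" if q: "q \<le> ?L" for q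
  proof (rule ccontr)
    assume nA: "vs ! q \<notin> A"
    have "\<exists>r. 0 \<le> r \<and> r < q \<and> vs ! r = i"
      using stay_fwd[OF assms(1), of 0 q] b(2) assms(2) q nA by auto
    then obtain r where r: "r < q" "vs ! r = i" by auto
    have "\<exists>r'. q < r' \<and> r' \<le> ?L \<and> vs ! r' = i"
      using stay_bwd[OF assms(1), of ?L q] b(3) assms(3) q nA by auto
    then obtain r' where r': "q < r'" "r' \<le> ?L" "vs ! r' = i" by auto
    have "r = r'" using b(1,4) r r' q nth_eq_iff_index_eq[of vs r r'] by auto
    then show False using r r' by simp
  qed
  show ?thesis
  proof (rule sw_intro)
    show "length vs = Suc (length es)" "vs ! 0 = v" "vs ! length es = v'" "distinct vs" "distinct es"
      using b by auto
  next
    fix t assume t: "t < length es"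
    have "es ! t \<notin> E2"
    proof
      assume "es ! t \<in> E2"
      then have "vs ! t \<in> B" "vs ! Suc t \<in> B" using b(6)[OF t] E2B by auto
      moreover have "vs ! t \<in> A" "vs ! Suc t \<in> A" using allA t by auto
      ultimately have "vs ! t = vs ! Suc t" using AB by auto
      then show False using b(1,4) t nth_eq_iff_index_eq[of vs t "Suc t"] by auto
    qed
    then show "es ! t \<in> E1 \<and> vs ! t \<in> es ! t \<and> vs ! Suc t \<in> es ! t" using b(6)[OF t] by auto
  qed
qed

end

lemma glue_sym: "glue A B E1 E2 i \<Longrightarrow> glue B A E2 E1 i"
  unfolding glue_def by auto



lemma sw_edges: "simple_walk E v v' vs es \<Longrightarrow> set es \<subseteq> E"
  using sw_basic(6) by (fastforce simp: in_set_conv_nth)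

lemma ht_ex: "hypertreeV V E \<Longrightarrow> v \<in> V \<Longrightarrow> v' \<in> V \<Longrightarrow> \<exists>vs es. simple_walk E v v' vs es"
proof -
  assume "hypertreeV V E" "v \<in> V" "v' \<in> V"
  then have "\<exists>!p. simple_walk E v v' (fst p) (snd p)" unfolding hypertreeV_def by blast
  then obtain p where "simple_walk E v v' (fst p) (snd p)" by (meson ex1_implies_ex)
  then show ?thesis by blast
qed

lemma ht_uniq:
  assumes "hypertreeV V E" "v \<in> V" "v' \<in> V" "simple_walk E v v' vs es" "simple_walk E v v' vs' es'"
  shows "vs = vs' \<and> es = es'"
proof -
  have "\<exists>!p. simple_walk E v v' (fst p) (snd p)" using assms(1-3) unfolding hypertreeV_def by blast
  then have "(vs, es) = (vs', es')" using assms(4,5) by (metis fst_conv snd_conv)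
  then show ?thesis by simp
qed

lemma ex1_walk:
  assumes "\<exists>vs es. simple_walk E v v' vs es"
    "\<And>vs es vs' es'. simple_walk E v v' vs es \<Longrightarrow> simple_walk E v v' vs' es' \<Longrightarrow> vs = vs' \<and> es = es'"
  shows "\<exists>!p. simple_walk E v v' (fst p) (snd p)"
proof -
  obtain vs es where w: "simple_walk E v v' vs es" using assms(1) by blast
  show ?thesis
  proof (rule ex1I[of _ "(vs, es)"])
    show "simple_walk E v v' (fst (vs, es)) (snd (vs, es))" using w by simp
    fix p assume "simple_walk E v v' (fst p) (snd p)"
    then show "p = (vs, es)" using assms(2)[OF _ w, of "fst p" "snd p"] by (cases p) auto
  qed
qed

lemma ht_edges: "hypertreeV V E \<Longrightarrow> \<forall>e\<in>E. e \<subseteq> V"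
  unfolding hypertreeV_def by blast

lemma walk_concat:
  assumes w1: "simple_walk E1 v x vs1 es1" and w2: "simple_walk E2 x v' vs2 es2"
    and dv: "set vs1 \<inter> set (tl vs2) = {}" and de: "set es1 \<inter> set es2 = {}"
  shows "simple_walk (E1 \<union> E2) v v' (vs1 @ tl vs2) (es1 @ es2)"
proof -
  note b1 = sw_basic[OF w1] and b2 = sw_basic[OF w2]
  let ?L1 = "length es1" and ?L2 = "length es2"
  have ix: "(vs1 @ tl vs2) ! (?L1 + r) = vs2 ! r" if "r \<le> ?L2" for r
  proof (cases r)
    case 0 then show ?thesis using b1 b2 by (simp add: nth_append)
  next
    case (Suc r') then show ?thesis using b1 b2 that by (simp add: nth_append nth_tl)
  qed
  show ?thesis
  proof (rule sw_intro)
    show "length (vs1 @ tl vs2) = Suc (length (es1 @ es2))" using b1 b2 by simp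
    show "(vs1 @ tl vs2) ! 0 = v" using b1 by (simp add: nth_append)
    show "(vs1 @ tl vs2) ! length (es1 @ es2) = v'" using ix[of ?L2] b2 by simp
    show "distinct (vs1 @ tl vs2)" using b1 b2 dv by (simp add: distinct_tl)
    show "distinct (es1 @ es2)" using b1 b2 de by simp
  next
    fix t assume t: "t < length (es1 @ es2)"
    show "(es1 @ es2) ! t \<in> E1 \<union> E2 \<and> (vs1 @ tl vs2) ! t \<in> (es1 @ es2) ! t \<and> (vs1 @ tl vs2) ! Suc t \<in> (es1 @ es2) ! t"
    proof (cases "t < ?L1")
      case True
      then show ?thesis using b1(6)[OF True] b1(1) by (simp add: nth_append)
    next
      case False
      define r where "r = t - ?L1"
      have r: "t = ?L1 + r" "r < ?L2" using False t by (auto simp: r_def)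
      have "(vs1 @ tl vs2) ! t = vs2 ! r" "(vs1 @ tl vs2) ! Suc t = vs2 ! Suc r"
        using ix[of r] ix[of "Suc r"] r by auto
      moreover have "(es1 @ es2) ! t = es2 ! r" using r by (simp add: nth_append)
      ultimately show ?thesis using b2(6)[OF r(2)] by simp
    qed
  qed
qed

lemma glue_inside_ex1:
  assumes ht: "hypertreeV A E1" and g: "glue A B E1 E2 i" and v: "v \<in> A" "v' \<in> A"
  shows "\<exists>!p. simple_walk (E1 \<union> E2) v v' (fst p) (snd p)"
proof (rule ex1_walk)
  show "\<exists>vs es. simple_walk (E1 \<union> E2) v v' vs es"
    using ht_ex[OF ht v] sw_mono by blast
next
  fix vs es vs' es'
  assume "simple_walk (E1 \<union> E2) v v' vs es" "simple_walk (E1 \<union> E2) v v' vs' es'"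
  then show "vs = vs' \<and> es = es'"
    using glue.inside[OF g] ht_uniq[OF ht v] v by blast
qed

lemma glue_cross_ex1:
  assumes ht1: "hypertreeV A E1" and ht2: "hypertreeV B E2" and AB: "A \<inter> B = {i}"
    and v: "v \<in> A" "v \<notin> B" "v' \<in> B" "v' \<notin> A"
  shows "\<exists>!p. simple_walk (E1 \<union> E2) v v' (fst p) (snd p)"
proof -
  have g: "glue A B E1 E2 i" using ht1 ht2 AB unfolding glue_def hypertreeV_def by auto
  have g': "glue B A E2 E1 i" by (rule glue_sym[OF g])
  have iA: "i \<in> A" "i \<in> B" using AB by auto
  have E12: "E1 \<inter> E2 = {}"
  proof (rule ccontr)
    assume "E1 \<inter> E2 \<noteq> {}"
    then obtain e where e: "e \<in> E1" "e \<in> E2" by auto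
    have "e \<subseteq> A" "e \<subseteq> B" "card e \<ge> 2" using e ht1 ht2 unfolding hypertreeV_def by auto
    then have "e \<subseteq> {i}" "card e \<ge> 2" using AB by blast+
    moreover have "card e \<le> 1" using card_mono[OF _ \<open>e \<subseteq> {i}\<close>] by simp
    ultimately show False by simp
  qed
  show ?thesis
  proof (rule ex1_walk)
    obtain vs1 es1 where w1: "simple_walk E1 v i vs1 es1" using ht_ex[OF ht1 v(1) iA(1)] by blast
    obtain vs2 es2 where w2: "simple_walk E2 i v' vs2 es2" using ht_ex[OF ht2 iA(2) v(3)] by blast
    have s1: "set vs1 \<subseteq> A" using sw_set[OF w1 ht_edges[OF ht1] v(1)] .
    have s2: "set vs2 \<subseteq> B" using sw_set[OF w2 ht_edges[OF ht2] iA(2)] .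
    have "vs2 ! 0 = i" "distinct vs2" "vs2 \<noteq> []" using sw_basic[OF w2] by auto
    then have "i \<notin> set (tl vs2)" by (cases vs2) auto
    moreover have "set (tl vs2) \<subseteq> set vs2" by (cases vs2) auto
    ultimately have t2: "set (tl vs2) \<subseteq> B - {i}" using s2 by auto
    have "set vs1 \<inter> (B - {i}) = {}" using s1 AB by auto
    then have "set vs1 \<inter> set (tl vs2) = {}" using t2 by auto
    moreover have "set es1 \<inter> set es2 = {}" using sw_edges[OF w1] sw_edges[OF w2] E12 by auto
    ultimately show "\<exists>vs es. simple_walk (E1 \<union> E2) v v' vs es"
      using walk_concat[OF w1 w2] by blast
  next
    fix vs es vs' es'
    assume W: "simple_walk (E1 \<union> E2) v v' vs es" and W': "simple_walk (E1 \<union> E2) v v' vs' es'"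
    obtain s where s: "s \<le> length es" "vs ! s = i" using glue.cross[OF g W v(1) v(4)] by blast
    obtain s' where s': "s' \<le> length es'" "vs' ! s' = i" using glue.cross[OF g W' v(1) v(4)] by blast
    have p1: "simple_walk E1 v i (take (Suc s) vs) (take s es)"
      using glue.inside[OF g sw_split(1)[OF W s] v(1) iA(1)] .
    have p1': "simple_walk E1 v i (take (Suc s') vs') (take s' es')"
      using glue.inside[OF g sw_split(1)[OF W' s'] v(1) iA(1)] .
    have W2: "simple_walk (E2 \<union> E1) i v' (drop s vs) (drop s es)"
      using sw_split(2)[OF W s] by (simp add: Un_commute)
    have W2': "simple_walk (E2 \<union> E1) i v' (drop s' vs') (drop s' es')"
      using sw_split(2)[OF W' s'] by (simp add: Un_commute)
    have p2: "simple_walk E2 i v' (drop s vs) (drop s es)"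
      using glue.inside[OF g' W2 iA(2) v(3)] .
    have p2': "simple_walk E2 i v' (drop s' vs') (drop s' es')"
      using glue.inside[OF g' W2' iA(2) v(3)] .
    have eq1: "take (Suc s) vs = take (Suc s') vs'" "take s es = take s' es'"
      using ht_uniq[OF ht1 v(1) iA(1) p1 p1'] by auto
    have "length (take (Suc s) vs) = Suc s" "length (take (Suc s') vs') = Suc s'"
      using s s' sw_basic(1)[OF W] sw_basic(1)[OF W'] by auto
    then have ss: "s' = s" using eq1 by simp
    have eq2: "drop s vs = drop s vs'" "drop s es = drop s es'"
      using ht_uniq[OF ht2 iA(2) v(3) p2 p2'] ss by auto
    have "take s vs = take s vs'"
      using eq1(1) ss by (metis lessI less_imp_le_nat min.absorb1 take_take)
    then have "vs = vs'" using eq2(1) by (metis append_take_drop_id)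
    moreover have "es = es'" using eq1(2) eq2(2) ss by (metis append_take_drop_id)
    ultimately show "vs = vs' \<and> es = es'" by simp
  qed
qed

lemma glue_ht:
  assumes ht1: "hypertreeV A E1" and ht2: "hypertreeV B E2" and AB: "A \<inter> B = {i}"
  shows "hypertreeV (A \<union> B) (E1 \<union> E2)"
proof -
  have g: "glue A B E1 E2 i" using ht1 ht2 AB unfolding glue_def hypertreeV_def by auto
  have g': "glue B A E2 E1 i" by (rule glue_sym[OF g])
  have BA: "B \<inter> A = {i}" using AB by auto
  have "\<exists>!p. simple_walk (E1 \<union> E2) v v' (fst p) (snd p)" if v: "v \<in> A \<union> B" "v' \<in> A \<union> B" for v v'
  proof -
    consider "v \<in> A" "v' \<in> A" | "v \<in> B" "v' \<in> B" | "v \<in> A" "v \<notin> B" "v' \<in> B" "v' \<notin> A"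
      | "v \<in> B" "v \<notin> A" "v' \<in> A" "v' \<notin> B" using v by blast
    then show ?thesis
    proof cases
      case 1 then show ?thesis using glue_inside_ex1[OF ht1 g] by blast
    next
      case 2 then show ?thesis using glue_inside_ex1[OF ht2 g'] by (simp add: Un_commute)
    next
      case 3 then show ?thesis using glue_cross_ex1[OF ht1 ht2 AB] by blast
    next
      case 4 then show ?thesis using glue_cross_ex1[OF ht2 ht1 BA] by (simp add: Un_commute)
    qed
  qed
  moreover have "\<forall>e\<in>E1 \<union> E2. e \<subseteq> A \<union> B \<and> card e \<ge> 2" using ht1 ht2 unfolding hypertreeV_def by blast
  ultimately show ?thesis unfolding hypertreeV_def by blast
qed

lemma single_ht:
  assumes "card V \<ge> 2"
  shows "hypertreeV V {V}"
  unfolding hypertreeV_def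
proof (rule conjI)
  show "\<forall>e\<in>{V}. e \<subseteq> V \<and> card e \<ge> 2" using assms by auto
next
  show "\<forall>v\<in>V. \<forall>v'\<in>V. \<exists>!p. simple_walk {V} v v' (fst p) (snd p)"
  proof (intro ballI)
  fix v v' assume v: "v \<in> V" "v' \<in> V"
  show "\<exists>!p. simple_walk {V} v v' (fst p) (snd p)"
  proof (rule ex1_walk)
    show "\<exists>vs es. simple_walk {V} v v' vs es"
    proof (cases "v = v'")
      case True
      then show ?thesis by (intro exI[of _ "[v]"] exI[of _ "[]"]) (simp add: simple_walk_def)
    next
      case False
      then show ?thesis using v by (intro exI[of _ "[v, v']"] exI[of _ "[V]"]) (simp add: simple_walk_def)
    qed
  next
    have canon: "(v = v' \<longrightarrow> vs = [v] \<and> es = []) \<and> (v \<noteq> v' \<longrightarrow> vs = [v, v'] \<and> es = [V])"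
      if W: "simple_walk {V} v v' vs es" for vs es
    proof -
      note b = sw_basic[OF W]
      have "set es \<subseteq> {V}" using sw_edges[OF W] .
      then have "length es \<le> 1" using b(5) distinct_card[of es] card_mono[of "{V}" "set es"] by simp
      then consider "es = []" | "length es = 1" by (cases es) auto
      then show ?thesis
      proof cases
        case 1
        then have "length vs = 1" using b by simp
        then have "vs = [vs ! 0]" by (cases vs) auto
        then show ?thesis using 1 b by auto
      next
        case 2
        then have "length vs = 2" using b by simp
        then obtain a c where vs: "vs = [a, c]"
          by (metis One_nat_def length_0_conv length_Suc_conv numeral_2_eq_2)
        obtain f where es: "es = [f]" using 2 by (metis One_nat_def length_0_conv length_Suc_conv)
        have "f = V" using \<open>set es \<subseteq> {V}\<close> es by simp
        moreover have "v \<noteq> v'" "a = v" "c = v'" using b(2,3,4) 2 vs by auto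
        ultimately show ?thesis using vs es by auto
      qed
    qed
    fix vs es vs' es'
    assume "simple_walk {V} v v' vs es" "simple_walk {V} v v' vs' es'"
    then show "vs = vs' \<and> es = es'" using canon by metis
  qed
  qed
qed



lemma carry_glue:
  assumes ht1: "hypertreeV A E1" and ht2: "hypertreeV B E2" and AB: "A \<inter> B = {i}"
    and V: "V = A \<union> B" and cp: "pc_compat V i (A - {i}) k F" and kA: "k \<in> A" and FV: "F \<subseteq> V - {k}"
    and c1: "carriesV A E1 k (F \<inter> A)" and c2: "k = i \<Longrightarrow> carriesV B E2 i (F \<inter> B)"
  shows "carriesV V (E1 \<union> E2) k F"
  unfolding carriesV_def
proof (intro ballI allI impI)
  fix d j vs es
  assume d: "d \<in> F" and j: "j \<in> V - (F \<union> {k})" and W: "simple_walk (E1 \<union> E2) d j vs es"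
  have g: "glue A B E1 E2 i" using ht1 ht2 AB unfolding glue_def hypertreeV_def by auto
  have g': "glue B A E2 E1 i" by (rule glue_sym[OF g])
  have W': "simple_walk (E2 \<union> E1) d j vs es" using W by (simp add: Un_commute)
  have iA: "i \<in> A" "i \<in> B" using AB by auto
  have dV: "d \<in> V" using d FV by auto
  note b = sw_basic[OF W]
  show "k \<in> set vs"
  proof (cases "k = i")
    case True
    show ?thesis
    proof (cases "d \<in> A \<and> j \<in> A")
      case True
      then show ?thesis using glue.inside[OF g W] c1 d j unfolding carriesV_def by auto
    next
      case nAA: False
      show ?thesis
      proof (cases "d \<in> B \<and> j \<in> B")
        case True
        then have "simple_walk E2 d j vs es" using glue.inside[OF g' W'] by auto
        then show ?thesis using c2[OF \<open>k = i\<close>] d j True \<open>k = i\<close> unfolding carriesV_def by auto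
      next
        case False
        show ?thesis
        proof (cases "d \<in> A")
          case True
          then have "j \<notin> A" using nAA by auto
          then obtain s where "s \<le> length es" "vs ! s = i" using glue.cross[OF g W True] by blast
          then show ?thesis using b(1) \<open>k = i\<close> by (metis le_imp_less_Suc nth_mem)
        next
          case dnA: False
          then have "d \<in> B" using dV V by auto
          then have "j \<notin> B" using False by auto
          then obtain s where "s \<le> length es" "vs ! s = i" using glue.cross[OF g' W' \<open>d \<in> B\<close>] by blast
          then show ?thesis using b(1) \<open>k = i\<close> by (metis le_imp_less_Suc nth_mem)
        qed
      qed
    qed
  next
    case kni: False
    have sideA: "side V i (A - {i}) k = B - {i}" using kA kni V AB unfolding side_def by auto
    have cpd: "(B - {i}) \<inter> side V k F i = {}" using cp kni sideA unfolding pc_compat_def by auto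
    show ?thesis
    proof (cases "d \<in> A")
      case dA: True
      show ?thesis
      proof (cases "j \<in> A")
        case True
        then show ?thesis using glue.inside[OF g W dA True] c1 d dA j True unfolding carriesV_def by blast
      next
        case False
        then obtain s where s: "s \<le> length es" "vs ! s = i" using glue.cross[OF g W dA] by blast
        have "i \<notin> F"
        proof
          assume "i \<in> F"
          then have "j \<in> side V k F i" using j unfolding side_def by auto
          moreover have "j \<in> B - {i}" using j False V iA by auto
          ultimately show False using cpd by auto
        qed
        have P: "simple_walk E1 d i (take (Suc s) vs) (take s es)"
          using glue.inside[OF g sw_split(1)[OF W s] dA iA(1)] .
        have "i \<in> A - (F \<inter> A \<union> {k})" using iA \<open>i \<notin> F\<close> kni by auto
        then have "k \<in> set (take (Suc s) vs)" using c1 P d dA unfolding carriesV_def by blast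
        then show ?thesis using set_take_subset by fast
      qed
    next
      case dnA: False
      then have dB: "d \<in> B - {i}" using dV V iA by auto
      have "i \<in> F"
      proof (rule ccontr)
        assume "i \<notin> F"
        then have "d \<in> side V k F i" using d unfolding side_def by auto
        then show False using cpd dB by auto
      qed
      have jA: "j \<in> A"
      proof (rule ccontr)
        assume "j \<notin> A"
        then have "j \<in> B - {i}" using j V iA by auto
        moreover have "j \<in> side V k F i" using j \<open>i \<in> F\<close> unfolding side_def by auto
        ultimately show False using cpd by auto
      qed
      have "j \<noteq> i" using j \<open>i \<in> F\<close> by auto
      then have "j \<notin> B" using jA AB by auto
      then obtain s where s: "s \<le> length es" "vs ! s = i" using glue.cross[OF g' W'] dB by blast
      have P: "simple_walk E1 i j (drop s vs) (drop s es)"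
        using glue.inside[OF g sw_split(2)[OF W s] iA(1) jA] .
      have "i \<in> F \<inter> A" "j \<in> A - (F \<inter> A \<union> {k})" using iA \<open>i \<in> F\<close> jA j by auto
      then have "k \<in> set (drop s vs)" using c1 P unfolding carriesV_def by blast
      then show ?thesis using set_drop_subset by fast
    qed
  qed
qed

lemma side_restrict: "A \<subseteq> V \<Longrightarrow> l \<in> A \<Longrightarrow> side A k (F \<inter> A) l = side V k F l \<inter> A"
  unfolding side_def by auto

lemma compat_restrict:
  "A \<subseteq> V \<Longrightarrow> k \<in> A \<Longrightarrow> l \<in> A \<Longrightarrow> pc_compat V k F l G \<Longrightarrow> pc_compat A k (F \<inter> A) l (G \<inter> A)"
  unfolding pc_compat_def using side_restrict[of A V l k F] side_restrict[of A V k l G] by auto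

lemma compat_compl:
  assumes "D \<subseteq> V - {i}" "k \<in> V - {i} - D" "pc_compat V i D k F"
  shows "pc_compat V i (V - {i} - D) k F"
proof -
  have "side V i (V - {i} - D) k = side V i D k" using assms(1,2) unfolding side_def by auto
  then show ?thesis using assms(3) unfolding pc_compat_def by auto
qed

lemma construct:
  assumes "finite V" "card V \<ge> 2" "\<forall>(k, F)\<in>S. k \<in> V \<and> F \<subseteq> V - {k}"
    "\<forall>(k, F)\<in>S. \<forall>(l, G)\<in>S. pc_compat V k F l G"
  shows "\<exists>E. hypertreeV V E \<and> (\<forall>(k, F)\<in>S. carriesV V E k F)"
  using assms
proof (induction "card V" arbitrary: V S rule: less_induct)
  case less
  show ?case
  proof (cases "\<exists>(i, D)\<in>S. D \<noteq> {} \<and> V - {i} - D \<noteq> {}")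
    case False
    have "carriesV V {V} k F" if "(k, F) \<in> S" for k F
      using False that unfolding carriesV_def by auto
    then show ?thesis using single_ht[OF less.prems(2)] by blast
  next
    case True
    then obtain i D where iD: "(i, D) \<in> S" "D \<noteq> {}" "V - {i} - D \<noteq> {}" by blast
    have iV: "i \<in> V" "D \<subseteq> V - {i}" using iD(1) less.prems(3) by auto
    define A where "A = insert i D"
    define B where "B = V - D"
    have AB: "A \<inter> B = {i}" using iV unfolding A_def B_def by auto
    have V: "V = A \<union> B" using iV unfolding A_def B_def by auto
    have AV: "A \<subseteq> V" "B \<subseteq> V" using V by auto
    have fin: "finite A" "finite B" using AV less.prems(1) finite_subset by auto
    obtain x where x: "x \<in> V - {i} - D" using iD(3) by auto
    obtain y where y: "y \<in> D" using iD(2) by auto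
    have "A \<subset> V" using x AV unfolding A_def by auto
    then have cA: "card A < card V" using less.prems(1) psubset_card_mono by blast
    have "B \<subset> V" using y iV AV unfolding B_def by auto
    then have cB: "card B < card V" using less.prems(1) psubset_card_mono by blast
    have "{i, y} \<subseteq> A" "i \<noteq> y" using y iV unfolding A_def by auto
    then have sA: "{i, y} \<subseteq> A" "i \<noteq> y" .
    have "card {i, y} \<le> card A" by (rule card_mono[OF fin(1) sA(1)])
    moreover have "card {i, y} = 2" using sA(2) by simp
    ultimately have c2A: "card A \<ge> 2" by linarith
    have "{i, x} \<subseteq> B" "i \<noteq> x" using x iV unfolding B_def by auto
    then have sB: "{i, x} \<subseteq> B" "i \<noteq> x" .
    have "card {i, x} \<le> card B" by (rule card_mono[OF fin(2) sB(1)])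
    moreover have "card {i, x} = 2" using sB(2) by simp
    ultimately have c2B: "card B \<ge> 2" by linarith
    define SA where "SA = {(k, F \<inter> A) | k F. (k, F) \<in> S \<and> k \<in> A}"
    define SB where "SB = {(k, F \<inter> B) | k F. (k, F) \<in> S \<and> k \<in> B}"
    have SA1: "\<forall>(k, F)\<in>SA. k \<in> A \<and> F \<subseteq> A - {k}" using less.prems(3) unfolding SA_def by auto
    have SB1: "\<forall>(k, F)\<in>SB. k \<in> B \<and> F \<subseteq> B - {k}" using less.prems(3) unfolding SB_def by auto
    have SA2: "\<forall>(k, F)\<in>SA. \<forall>(l, G)\<in>SA. pc_compat A k F l G"
      using less.prems(4) compat_restrict[OF AV(1)] unfolding SA_def by fastforce
    have SB2: "\<forall>(k, F)\<in>SB. \<forall>(l, G)\<in>SB. pc_compat B k F l G"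
      using less.prems(4) compat_restrict[OF AV(2)] unfolding SB_def by fastforce
    obtain E1 where E1: "hypertreeV A E1" "\<forall>(k, F)\<in>SA. carriesV A E1 k F"
      using less.hyps[OF cA fin(1) c2A SA1 SA2] by blast
    obtain E2 where E2: "hypertreeV B E2" "\<forall>(k, F)\<in>SB. carriesV B E2 k F"
      using less.hyps[OF cB fin(2) c2B SB1 SB2] by blast
    have ht: "hypertreeV V (E1 \<union> E2)" using glue_ht[OF E1(1) E2(1) AB] V by simp
    have "carriesV V (E1 \<union> E2) k F" if kF: "(k, F) \<in> S" for k F
    proof -
      have kV: "k \<in> V" "F \<subseteq> V - {k}" using kF less.prems(3) by auto
      have cp: "pc_compat V i D k F" using less.prems(4) iD(1) kF by fastforce
      show ?thesis
      proof (cases "k \<in> A")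
        case True
        have Ai: "A - {i} = D" using iV unfolding A_def by auto
        have c1: "carriesV A E1 k (F \<inter> A)" using E1(2) kF True unfolding SA_def by blast
        have c2: "carriesV B E2 i (F \<inter> B)" if "k = i"
          using E2(2) kF that iV unfolding SB_def B_def by blast
        show ?thesis by (rule carry_glue[OF E1(1) E2(1) AB V _ True kV(2) c1 c2]) (use cp Ai in auto)
      next
        case False
        then have kB: "k \<in> B" "k \<in> V - {i} - D" using V kV unfolding A_def by auto
        have BA: "B \<inter> A = {i}" using AB by auto
        have Bi: "B - {i} = V - {i} - D" unfolding B_def by auto
        have cp': "pc_compat V i (B - {i}) k F" using compat_compl[OF iV(2) kB(2) cp] Bi by simp
        have c1: "carriesV B E2 k (F \<inter> B)" using E2(2) kF kB unfolding SB_def by blast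
        have "carriesV V (E2 \<union> E1) k F"
          by (rule carry_glue[OF E2(1) E1(1) BA _ cp' kB(1) kV(2) c1]) (use V False iV A_def in auto)
        then show ?thesis by (simp add: Un_commute)
      qed
    qed
    then show ?thesis using ht by blast
  qed
qed

lemma ht_noncompat:
  assumes ht: "hypertreeV V E" and ci: "carriesV V E i D" and ck: "carriesV V E k F"
    and iV: "i \<in> V" "D \<subseteq> V - {i}" and kV: "k \<in> V" "F \<subseteq> V - {k}"
  shows "pc_compat V i D k F"
proof (rule ccontr)
  assume nc: "\<not> pc_compat V i D k F"
  then have ik: "i \<noteq> k" unfolding pc_compat_def by auto
  obtain d where d: "d \<in> side V i D k" "d \<in> side V k F i" using nc unfolding pc_compat_def by auto
  have dV: "d \<in> V" using d side_sub[OF iV(2)] by auto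
  have pass: "a \<in> set vs" if "carriesV V E a X" "X \<subseteq> V - {a}" "b \<in> V - {a}" "x \<in> side V a X b"
      "simple_walk E x b vs es" for a X b x vs es
  proof (cases "b \<in> X")
    case True
    then have "x \<in> V - {a} - X" using that(4) unfolding side_def by auto
    moreover have "simple_walk E b x (rev vs) (rev es)" using sw_rev[OF that(5)] .
    ultimately have "a \<in> set (rev vs)" using that(1) True unfolding carriesV_def by blast
    then show ?thesis by simp
  next
    case False
    then have "x \<in> X" using that(4) unfolding side_def by auto
    then show ?thesis using that(1,3,5) False unfolding carriesV_def by blast
  qed
  obtain vs es where W: "simple_walk E d k vs es" using ht_ex[OF ht dV kV(1)] by blast
  have "i \<in> set vs" using pass[OF ci iV(2) _ d(1) W] kV ik by auto
  then obtain s where s: "s < length vs" "vs ! s = i" by (auto simp: in_set_conv_nth)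
  note b = sw_basic[OF W]
  have sL: "s \<le> length es" "s \<noteq> length es" using s b ik by auto
  have P: "simple_walk E d i (take (Suc s) vs) (take s es)" using sw_split(1)[OF W sL(1) s(2)] .
  have "k \<in> set (take (Suc s) vs)" using pass[OF ck kV(2) _ d(2) P] iV ik by auto
  then obtain r where r: "r < Suc s" "vs ! r = k" by (auto simp: in_set_conv_nth)
  have "r = length es" using r b s nth_eq_iff_index_eq[of vs r "length es"] by auto
  then show False using r sL by auto
qed



theorem theorem3p6:
  fixes n :: nat and ps :: "(nat \<times> nat set) list"
  assumes "n \<ge> 3"
    and "\<forall>(i, D) \<in> set ps. is_partial_conj n i D"
  shows "(\<exists>\<Theta>. hypertree n \<Theta> \<and> (\<forall>(i, D) \<in> set ps. carries n \<Theta> i D)) \<longleftrightarrow>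
         (\<forall>(i, D) \<in> set ps. \<forall>(k, F) \<in> set ps. commute_out n i D k F)"
proof
  assume "\<exists>\<Theta>. hypertree n \<Theta> \<and> (\<forall>(i, D) \<in> set ps. carries n \<Theta> i D)"
  then obtain E where E: "hypertreeV {1..n} E" "\<forall>(i, D) \<in> set ps. carriesV {1..n} E i D"
    by (auto simp: hypertree_V carries_V)
  show "\<forall>(i, D) \<in> set ps. \<forall>(k, F) \<in> set ps. commute_out n i D k F"
  proof (intro ballI, clarify)
    fix i D k F assume p: "(i, D) \<in> set ps" "(k, F) \<in> set ps"
    have a: "i \<in> {1..n}" "D \<subseteq> {1..n} - {i}" "k \<in> {1..n}" "F \<subseteq> {1..n} - {k}"
      using p assms(2) unfolding is_partial_conj_def by auto
    have "pc_compat {1..n} i D k F"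
      using ht_noncompat[OF E(1) _ _ a(1,2) a(3,4)] E(2) p by auto
    then show "commute_out n i D k F" using compat_commute[OF a(1) a(3) a(2) a(4)] by blast
  qed
next
  assume c: "\<forall>(i, D) \<in> set ps. \<forall>(k, F) \<in> set ps. commute_out n i D k F"
  have S1: "\<forall>(k, F)\<in>set ps. k \<in> {1..n} \<and> F \<subseteq> {1..n} - {k}"
    using assms(2) unfolding is_partial_conj_def by auto
  have S2: "\<forall>(k, F)\<in>set ps. \<forall>(l, G)\<in>set ps. pc_compat {1..n} k F l G"
  proof (intro ballI, clarify)
    fix i D k F assume p: "(i, D) \<in> set ps" "(k, F) \<in> set ps"
    have a: "i \<in> {1..n}" "D \<subseteq> {1..n} - {i}" "k \<in> {1..n}" "F \<subseteq> {1..n} - {k}"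
      using p S1 by auto
    have "commute_out n i D k F" using c p by fastforce
    then show "pc_compat {1..n} i D k F" using commute_compat[OF a(1) a(3) a(2) a(4)] by blast
  qed
  have "card {1..n} \<ge> 2" using assms(1) by simp
  then obtain E where "hypertreeV {1..n} E" "\<forall>(k, F)\<in>set ps. carriesV {1..n} E k F"
    using construct[OF _ _ S1 S2] by blast
  then show "\<exists>\<Theta>. hypertree n \<Theta> \<and> (\<forall>(i, D) \<in> set ps. carries n \<Theta> i D)"
    by (auto simp: hypertree_V carries_V)
qed

end
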